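(* Let $X,Y$ be compact metric spaces, $\epsilon\ge0$, and $X_\epsilon,Y_\epsilon$ finite $\epsilon$-nets of $X$ and $Y$ respectively. Let $n=\min\{|X_\epsilon|,|Y_\epsilon|\}$. Then $d_{\mathrm{GH}}(X,Y)\le(2n-1)\widehat{d}_{\mathrm{GH}}(X,Y)+2n\epsilon$.
   Context: An $\epsilon$-net of $X$ is a subset such that every point of $X$ is within distance $\le\epsilon$ of it. For $f:X\to Y$, $\operatorname{dis}(f)=\sup_{x,x'}|d_X(x,x')-d_Y(f(x),f(x'))|$; $\operatorname{codis}(f,g)=\sup_{x,y}|d_X(x,g(y))-d_Y(f(x),y)|$. $d_{\mathrm{GH}}$ is the Gromov--Hausdorff distance, equal to $\frac12\inf_{f,g}\max\{\operatorname{dis}(f),\operatorname{dis}(g),\operatorname{codis}(f,g)\}$; $\widehat{d}_{\mathrm{GH}}(X,Y)=\frac12\max\{\inf_{f:X\to Y}\operatorname{dis}(f),\inf_{g:Y\to X}\operatorname{dis}(g)\}$. *)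

theory Defs
  imports "HOL-Analysis.Analysis"
begin

text \<open>Metric spaces are rendered as subsets of metric-space types with the induced metric.\<close>

definition eps_net :: "'a::metric_space set \<Rightarrow> real \<Rightarrow> 'a set \<Rightarrow> bool" where
  "eps_net X \<epsilon> N \<longleftrightarrow> N \<subseteq> X \<and> (\<forall>x\<in>X. \<exists>p\<in>N. dist x p \<le> \<epsilon>)"

definition dis :: "'a::metric_space set \<Rightarrow> ('a \<Rightarrow> 'b::metric_space) \<Rightarrow> real" where
  "dis X f = (SUP p\<in>X \<times> X. \<bar>dist (fst p) (snd p) - dist (f (fst p)) (f (snd p))\<bar>)"

definition codis :: "'a::metric_space set \<Rightarrow> 'b::metric_space set
    \<Rightarrow> ('a \<Rightarrow> 'b) \<Rightarrow> ('b \<Rightarrow> 'a) \<Rightarrow> real" where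
  "codis X Y f g = (SUP p\<in>X \<times> Y. \<bar>dist (fst p) (g (snd p)) - dist (f (fst p)) (snd p)\<bar>)"

definition dGH :: "'a::metric_space set \<Rightarrow> 'b::metric_space set \<Rightarrow> real" where
  "dGH X Y = (1/2) * (INF fg\<in>(X \<rightarrow> Y) \<times> (Y \<rightarrow> X).
      max (dis X (fst fg)) (max (dis Y (snd fg)) (codis X Y (fst fg) (snd fg))))"

definition dGH_hat :: "'a::metric_space set \<Rightarrow> 'b::metric_space set \<Rightarrow> real" where
  "dGH_hat X Y = (1/2) * max (INF f\<in>(X \<rightarrow> Y). dis X f) (INF g\<in>(Y \<rightarrow> X). dis Y g)"

end

theory Submission
  imports Defs
begin

primrec AB :: "('a \<Rightarrow> 'b) \<Rightarrow> ('b \<Rightarrow> 'a) \<Rightarrow> 'a set \<Rightarrow> 'b set \<Rightarrow> nat \<Rightarrow> 'a set \<times> 'b set" where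
  "AB f g X Y 0 = (X, Y)"
| "AB f g X Y (Suc k) = (g ` snd (AB f g X Y k), f ` fst (AB f g X Y k))"

lemma fst_AB_Suc: "fst (AB f g X Y (Suc k)) = g ` snd (AB f g X Y k)" by simp
lemma snd_AB_Suc: "snd (AB f g X Y (Suc k)) = f ` fst (AB f g X Y k)" by simp

lemma AB_mono:
  assumes "f \<in> X \<rightarrow> Y" "g \<in> Y \<rightarrow> X"
  shows "fst (AB f g X Y (Suc k)) \<subseteq> fst (AB f g X Y k) \<and> snd (AB f g X Y (Suc k)) \<subseteq> snd (AB f g X Y k)"
proof (induction k)
  case 0
  then show ?case using assms by auto
next
  case (Suc k)
  then show ?case unfolding fst_AB_Suc[of f g X Y "Suc k"] snd_AB_Suc[of f g X Y "Suc k"] fst_AB_Suc[of f g X Y k] snd_AB_Suc[of f g X Y k] by (meson image_mono)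
qed

lemma AB_sub:
  assumes "f \<in> X \<rightarrow> Y" "g \<in> Y \<rightarrow> X"
  shows "fst (AB f g X Y k) \<subseteq> X \<and> snd (AB f g X Y k) \<subseteq> Y"
proof (induction k)
  case 0 then show ?case by simp
next
  case (Suc k) then show ?case using AB_mono[OF assms, of k] by blast
qed

lemma AB_ne:
  assumes "X \<noteq> {}" "Y \<noteq> {}"
  shows "fst (AB f g X Y k) \<noteq> {} \<and> snd (AB f g X Y k) \<noteq> {}"
  using assms by (induction k) auto

lemma AB_wit:
  fixes X :: "'a::metric_space set" and Y :: "'b::metric_space set"
  assumes f: "f \<in> X \<rightarrow> Y" and g: "g \<in> Y \<rightarrow> X"
    and df: "\<forall>x\<in>X. \<forall>x'\<in>X. dist (f x) (f x') \<ge> dist x x' - a"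
    and dg: "\<forall>y\<in>Y. \<forall>y'\<in>Y. dist (g y) (g y') \<ge> dist y y' - a"
    and xs: "xs \<in> X" "\<forall>y\<in>Y. dist xs (g y) > R"
    and ys: "ys \<in> Y" "\<forall>x\<in>X. dist ys (f x) > R"
  shows "(\<exists>u\<in>fst (AB f g X Y k). \<forall>s\<in>fst (AB f g X Y (Suc k)). dist u s > R - real k * a)
       \<and> (\<exists>v\<in>snd (AB f g X Y k). \<forall>s\<in>snd (AB f g X Y (Suc k)). dist v s > R - real k * a)"
proof (induction k)
  case 0
  then show ?case using xs ys by auto
next
  case (Suc k)
  from Suc obtain u where u: "u\<in>fst (AB f g X Y k)" "\<forall>s\<in>fst (AB f g X Y (Suc k)). dist u s > R - real k * a" by blast
  from Suc obtain v where v: "v\<in>snd (AB f g X Y k)" "\<forall>s\<in>snd (AB f g X Y (Suc k)). dist v s > R - real k * a" by blast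
  have sub: "fst (AB f g X Y k) \<subseteq> X" "snd (AB f g X Y k) \<subseteq> Y"
     "fst (AB f g X Y (Suc k)) \<subseteq> X" "snd (AB f g X Y (Suc k)) \<subseteq> Y"
    using AB_sub[OF f g] by blast+
  have A: "\<forall>s\<in>fst (AB f g X Y (Suc (Suc k))). dist (g v) s > R - real (Suc k) * a"
  proof
    fix s assume "s \<in> fst (AB f g X Y (Suc (Suc k)))"
    then obtain s' where s': "s' \<in> snd (AB f g X Y (Suc k))" "s = g s'"
      unfolding fst_AB_Suc[of f g X Y "Suc k"] snd_AB_Suc[of f g X Y "Suc k"] by blast
    have "dist (g v) (g s') \<ge> dist v s' - a" using dg v(1) s'(1) sub by blast
    moreover have "dist v s' > R - real k * a" using v(2) s'(1) by blast
    ultimately show "dist (g v) s > R - real (Suc k) * a" using s' by (simp add: algebra_simps)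
  qed
  have B: "\<forall>s\<in>snd (AB f g X Y (Suc (Suc k))). dist (f u) s > R - real (Suc k) * a"
  proof
    fix s assume "s \<in> snd (AB f g X Y (Suc (Suc k)))"
    then obtain s' where s': "s' \<in> fst (AB f g X Y (Suc k))" "s = f s'"
      unfolding fst_AB_Suc[of f g X Y "Suc k"] snd_AB_Suc[of f g X Y "Suc k"] by blast
    have "dist (f u) (f s') \<ge> dist u s' - a" using df u(1) s'(1) sub by blast
    moreover have "dist u s' > R - real k * a" using u(2) s'(1) by blast
    ultimately show "dist (f u) s > R - real (Suc k) * a" using s' by (simp add: algebra_simps)
  qed
  have "g v \<in> fst (AB f g X Y (Suc k))" "f u \<in> snd (AB f g X Y (Suc k))" using u v by auto
  then show ?case using A B by blast
qed

lemma core: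
  fixes X :: "'a::metric_space set" and Y :: "'b::metric_space set"
  assumes f: "f \<in> X \<rightarrow> Y" and g: "g \<in> Y \<rightarrow> X"
    and df: "\<forall>x\<in>X. \<forall>x'\<in>X. dist (f x) (f x') \<ge> dist x x' - a"
    and dg: "\<forall>y\<in>Y. \<forall>y'\<in>Y. dist (g y) (g y') \<ge> dist y y' - a"
    and a: "a \<ge> 0" and ne: "X \<noteq> {}" "Y \<noteq> {}"
    and N: "finite N" "eps_net X \<epsilon> N"
  shows "(\<forall>x\<in>X. \<exists>y\<in>Y. dist x (g y) \<le> (real (card N) - 1) * a + 2 * \<epsilon>)
       \<or> (\<forall>y\<in>Y. \<exists>x\<in>X. dist y (f x) \<le> (real (card N) - 1) * a + 2 * \<epsilon>)"
proof (rule ccontr)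
  define R where "R = (real (card N) - 1) * a + 2 * \<epsilon>"
  define n where "n = card N"
  assume "\<not> ?thesis"
  then obtain xs ys where xs: "xs \<in> X" "\<forall>y\<in>Y. dist xs (g y) > R"
    and ys: "ys \<in> Y" "\<forall>x\<in>X. dist ys (f x) > R"
    unfolding R_def by (auto simp: not_le)
  have net: "\<forall>x\<in>X. \<exists>p\<in>N. dist x p \<le> \<epsilon>" "N \<subseteq> X" using N(2) unfolding eps_net_def by auto
  define NN where "NN k = {p\<in>N. \<exists>s\<in>fst (AB f g X Y k). dist p s \<le> \<epsilon>}" for k
  have step: "NN (Suc k) \<subset> NN k" if "k < n" for k
  proof
    show "NN (Suc k) \<subseteq> NN k" unfolding NN_def using AB_mono[OF f g, of k] by blast
    obtain u where u: "u\<in>fst (AB f g X Y k)" "\<forall>s\<in>fst (AB f g X Y (Suc k)). dist u s > R - real k * a"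
      using AB_wit[OF f g df dg xs ys] by blast
    have "u \<in> X" using u(1) AB_sub[OF f g] by blast
    then obtain p where p: "p \<in> N" "dist u p \<le> \<epsilon>" using net by blast
    have Rk: "R - real k * a \<ge> 2 * \<epsilon>"
    proof -
      have "real k \<le> real (card N) - 1" using that unfolding n_def by linarith
      then have "real k * a \<le> (real (card N) - 1) * a" using a by (rule mult_right_mono)
      then show ?thesis unfolding R_def by linarith
    qed
    have "p \<in> NN k" unfolding NN_def using p u(1) by (auto simp: dist_commute)
    moreover have "p \<notin> NN (Suc k)"
    proof
      assume "p \<in> NN (Suc k)"
      then obtain s where s: "s \<in> fst (AB f g X Y (Suc k))" "dist p s \<le> \<epsilon>" unfolding NN_def by blast
      have "dist u s \<le> dist u p + dist p s" by (rule dist_triangle)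
      moreover have "dist u s > R - real k * a" using u(2) s(1) by blast
      ultimately show False using p(2) s(2) Rk by linarith
    qed
    ultimately show "NN (Suc k) \<noteq> NN k" by blast
  qed
  have fin: "finite (NN k)" for k unfolding NN_def using N(1) by simp
  have cnt: "card (NN k) + k \<le> n" if "k \<le> n" for k
    using that
  proof (induction k)
    case 0 then show ?case unfolding NN_def n_def by (simp add: card_mono N(1))
  next
    case (Suc k)
    have "card (NN (Suc k)) < card (NN k)" using step[of k] Suc(2) fin by (simp add: psubset_card_mono)
    then show ?case using Suc by simp
  qed
  obtain z where z: "z \<in> fst (AB f g X Y n)" using AB_ne[OF ne, of f g n] by blast
  then have "z \<in> X" using AB_sub[OF f g] by blast
  then obtain p where "p \<in> N" "dist z p \<le> \<epsilon>" using net by blast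
  then have "p \<in> NN n" unfolding NN_def using z by (auto simp: dist_commute)
  then have "card (NN n) \<ge> 1" using fin[of n] by (metis One_nat_def Suc_leI card_gt_0_iff empty_iff)
  with cnt[of n] show False by simp
qed

lemma dis_props:
  fixes X :: "'a::metric_space set" and Y :: "'b::metric_space set"
  assumes "bounded X" "bounded Y" "f \<in> X \<rightarrow> Y" "X \<noteq> {}"
  shows "0 \<le> dis X f" "\<forall>x\<in>X. \<forall>x'\<in>X. \<bar>dist x x' - dist (f x) (f x')\<bar> \<le> dis X f"
proof -
  obtain B1 where B1: "\<forall>x\<in>X. \<forall>y\<in>X. dist x y \<le> B1" using assms(1) bounded_two_points by blast
  obtain B2 where B2: "\<forall>x\<in>Y. \<forall>y\<in>Y. dist x y \<le> B2" using assms(2) bounded_two_points by blast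
  have bdd: "bdd_above ((\<lambda>p. \<bar>dist (fst p) (snd p) - dist (f (fst p)) (f (snd p))\<bar>) ` (X \<times> X))"
  proof (rule bdd_aboveI2)
    fix p assume "p \<in> X \<times> X"
    then have "dist (fst p) (snd p) \<le> B1" "dist (f (fst p)) (f (snd p)) \<le> B2" using B1 B2 assms(3) by (auto simp: Pi_iff)
    then show "\<bar>dist (fst p) (snd p) - dist (f (fst p)) (f (snd p))\<bar> \<le> B1 + B2"
      using zero_le_dist[of "fst p" "snd p"] zero_le_dist[of "f (fst p)" "f (snd p)"] by linarith
  qed
  show "\<forall>x\<in>X. \<forall>x'\<in>X. \<bar>dist x x' - dist (f x) (f x')\<bar> \<le> dis X f"
  proof (intro ballI)
    fix x x' assume "x \<in> X" "x' \<in> X"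
    then show "\<bar>dist x x' - dist (f x) (f x')\<bar> \<le> dis X f"
      unfolding dis_def using cSUP_upper[OF _ bdd, of "(x, x')"] by simp
  qed
  then show "0 \<le> dis X f" using assms(4) by (meson abs_ge_zero all_not_in_conv order_trans)
qed

lemma dGH_le_pair:
  fixes X :: "'a::metric_space set" and Y :: "'b::metric_space set"
  assumes bX: "bounded X" and bY: "bounded Y" and ne: "X \<noteq> {}" "Y \<noteq> {}"
    and f: "f \<in> X \<rightarrow> Y" and g: "g \<in> Y \<rightarrow> X"
    and df: "\<forall>x\<in>X. \<forall>x'\<in>X. \<bar>dist x x' - dist (f x) (f x')\<bar> \<le> c"
    and dg: "\<forall>y\<in>Y. \<forall>y'\<in>Y. \<bar>dist y y' - dist (g y) (g y')\<bar> \<le> c"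
    and cd: "\<forall>x\<in>X. \<forall>y\<in>Y. \<bar>dist x (g y) - dist (f x) y\<bar> \<le> c"
  shows "dGH X Y \<le> c / 2"
proof -
  have "dis X f \<le> c" unfolding dis_def using ne df by (intro cSUP_least) auto
  moreover have "dis Y g \<le> c" unfolding dis_def using ne dg by (intro cSUP_least) auto
  moreover have "codis X Y f g \<le> c" unfolding codis_def using ne cd by (intro cSUP_least) auto
  ultimately have m: "max (dis X f) (max (dis Y g) (codis X Y f g)) \<le> c" by simp
  have bb: "bdd_below ((\<lambda>fg. max (dis X (fst fg)) (max (dis Y (snd fg)) (codis X Y (fst fg) (snd fg)))) ` ((X \<rightarrow> Y) \<times> (Y \<rightarrow> X)))"
  proof (rule bdd_belowI2)
    fix fg assume "fg \<in> (X \<rightarrow> Y) \<times> (Y \<rightarrow> X)"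
    then have "0 \<le> dis X (fst fg)" using dis_props(1)[OF bX bY _ ne(1)] by auto
    then show "0 \<le> max (dis X (fst fg)) (max (dis Y (snd fg)) (codis X Y (fst fg) (snd fg)))" by simp
  qed
  have "(INF fg\<in>(X \<rightarrow> Y) \<times> (Y \<rightarrow> X). max (dis X (fst fg)) (max (dis Y (snd fg)) (codis X Y (fst fg) (snd fg)))) \<le> c"
    using cINF_lower2[OF bb, of "(f, g)" c] f g m by simp
  then show ?thesis unfolding dGH_def by simp
qed

lemma caseY:
  fixes X :: "'a::metric_space set" and Y :: "'b::metric_space set"
  assumes bX: "bounded X" and bY: "bounded Y" and ne: "X \<noteq> {}" "Y \<noteq> {}"
    and f: "f \<in> X \<rightarrow> Y"
    and df: "\<forall>x\<in>X. \<forall>x'\<in>X. \<bar>dist x x' - dist (f x) (f x')\<bar> \<le> a"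
    and cov: "\<forall>y\<in>Y. \<exists>x\<in>X. dist y (f x) \<le> R"
  shows "dGH X Y \<le> (a + 2 * R) / 2"
proof -
  define g where "g y = (SOME x. x \<in> X \<and> dist y (f x) \<le> R)" for y
  have gp: "g y \<in> X \<and> dist y (f (g y)) \<le> R" if "y \<in> Y" for y
    unfolding g_def using cov that by (metis (mono_tags, lifting) someI_ex)
  have R0: "R \<ge> 0" using gp ne(2) by (meson all_not_in_conv order_trans zero_le_dist)
  have a0: "a \<ge> 0" using df ne(1) by (meson abs_ge_zero all_not_in_conv order_trans)
  show ?thesis
  proof (rule dGH_le_pair[OF bX bY ne f])
    show "g \<in> Y \<rightarrow> X" using gp by auto
    show "\<forall>x\<in>X. \<forall>x'\<in>X. \<bar>dist x x' - dist (f x) (f x')\<bar> \<le> a + 2 * R" using df R0 by force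
    show "\<forall>y\<in>Y. \<forall>y'\<in>Y. \<bar>dist y y' - dist (g y) (g y')\<bar> \<le> a + 2 * R"
    proof (intro ballI)
      fix y y' assume y: "y \<in> Y" "y' \<in> Y"
      have 1: "\<bar>dist (g y) (g y') - dist (f (g y)) (f (g y'))\<bar> \<le> a" using df gp y by blast
      have 2: "dist y (f (g y)) \<le> R" "dist y' (f (g y')) \<le> R" using gp y by auto
      have "dist y y' \<le> dist y (f (g y)) + dist (f (g y)) (f (g y')) + dist (f (g y')) y'"
        by (meson dist_triangle order_trans add_mono order_refl)
      moreover have "dist (f (g y)) (f (g y')) \<le> dist (f (g y)) y + dist y y' + dist y' (f (g y'))"
        by (meson dist_triangle order_trans add_mono order_refl)
      ultimately show "\<bar>dist y y' - dist (g y) (g y')\<bar> \<le> a + 2 * R"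
        using 1 2 by (simp add: dist_commute abs_le_iff; linarith)
    qed
    show "\<forall>x\<in>X. \<forall>y\<in>Y. \<bar>dist x (g y) - dist (f x) y\<bar> \<le> a + 2 * R"
    proof (intro ballI)
      fix x y assume xy: "x \<in> X" "y \<in> Y"
      have 1: "\<bar>dist x (g y) - dist (f x) (f (g y))\<bar> \<le> a" using df gp xy by blast
      have 2: "dist y (f (g y)) \<le> R" using gp xy by auto
      have "dist (f x) y \<le> dist (f x) (f (g y)) + dist (f (g y)) y" by (rule dist_triangle)
      moreover have "dist (f x) (f (g y)) \<le> dist (f x) y + dist y (f (g y))" by (rule dist_triangle)
      ultimately show "\<bar>dist x (g y) - dist (f x) y\<bar> \<le> a + 2 * R"
        using 1 2 R0 by (simp add: dist_commute abs_le_iff; linarith)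
    qed
  qed
qed

lemma caseX:
  fixes X :: "'a::metric_space set" and Y :: "'b::metric_space set"
  assumes bX: "bounded X" and bY: "bounded Y" and ne: "X \<noteq> {}" "Y \<noteq> {}"
    and g: "g \<in> Y \<rightarrow> X"
    and dg: "\<forall>y\<in>Y. \<forall>y'\<in>Y. \<bar>dist y y' - dist (g y) (g y')\<bar> \<le> a"
    and cov: "\<forall>x\<in>X. \<exists>y\<in>Y. dist x (g y) \<le> R"
  shows "dGH X Y \<le> (a + 2 * R) / 2"
proof -
  define f where "f x = (SOME y. y \<in> Y \<and> dist x (g y) \<le> R)" for x
  have fp: "f x \<in> Y \<and> dist x (g (f x)) \<le> R" if "x \<in> X" for x
    unfolding f_def using cov that by (metis (mono_tags, lifting) someI_ex)
  have R0: "R \<ge> 0" using fp ne(1) by (meson all_not_in_conv order_trans zero_le_dist)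
  show ?thesis
  proof (rule dGH_le_pair[OF bX bY ne _ g])
    show "f \<in> X \<rightarrow> Y" using fp by auto
    show "\<forall>y\<in>Y. \<forall>y'\<in>Y. \<bar>dist y y' - dist (g y) (g y')\<bar> \<le> a + 2 * R" using dg R0 by force
    show "\<forall>x\<in>X. \<forall>x'\<in>X. \<bar>dist x x' - dist (f x) (f x')\<bar> \<le> a + 2 * R"
    proof (intro ballI)
      fix x x' assume x: "x \<in> X" "x' \<in> X"
      have 1: "\<bar>dist (f x) (f x') - dist (g (f x)) (g (f x'))\<bar> \<le> a" using dg fp x by blast
      have 2: "dist x (g (f x)) \<le> R" "dist x' (g (f x')) \<le> R" using fp x by auto
      have "dist x x' \<le> dist x (g (f x)) + dist (g (f x)) (g (f x')) + dist (g (f x')) x'"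
        by (meson dist_triangle order_trans add_mono order_refl)
      moreover have "dist (g (f x)) (g (f x')) \<le> dist (g (f x)) x + dist x x' + dist x' (g (f x'))"
        by (meson dist_triangle order_trans add_mono order_refl)
      ultimately show "\<bar>dist x x' - dist (f x) (f x')\<bar> \<le> a + 2 * R"
        using 1 2 by (simp add: dist_commute abs_le_iff; linarith)
    qed
    show "\<forall>x\<in>X. \<forall>y\<in>Y. \<bar>dist x (g y) - dist (f x) y\<bar> \<le> a + 2 * R"
    proof (intro ballI)
      fix x y assume xy: "x \<in> X" "y \<in> Y"
      have 1: "\<bar>dist (f x) y - dist (g (f x)) (g y)\<bar> \<le> a" using dg fp xy by blast
      have 2: "dist x (g (f x)) \<le> R" using fp xy by auto
      have "dist x (g y) \<le> dist x (g (f x)) + dist (g (f x)) (g y)" by (rule dist_triangle)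
      moreover have "dist (g (f x)) (g y) \<le> dist (g (f x)) x + dist x (g y)" by (rule dist_triangle)
      ultimately show "\<bar>dist x (g y) - dist (f x) y\<bar> \<le> a + 2 * R"
        using 1 2 R0 by (simp add: dist_commute abs_le_iff; linarith)
    qed
  qed
qed

theorem mainTheorem8:
  fixes X :: "'a::metric_space set" and Y :: "'b::metric_space set"
    and Xe :: "'a set" and Ye :: "'b set" and \<epsilon> :: real
  assumes "compact X" "X \<noteq> {}" "compact Y" "Y \<noteq> {}"
    and "\<epsilon> \<ge> 0"
    and "finite Xe" "eps_net X \<epsilon> Xe"
    and "finite Ye" "eps_net Y \<epsilon> Ye"
  shows "dGH X Y \<le> (2 * real (min (card Xe) (card Ye)) - 1) * dGH_hat X Y
                   + 2 * real (min (card Xe) (card Ye)) * \<epsilon>"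
proof -
  note ne = assms(2,4)
  have bX: "bounded X" and bY: "bounded Y" using assms(1,3) compact_imp_bounded by auto
  define n where "n = min (card Xe) (card Ye)"
  define T where "T = (2 * real n - 1) * dGH_hat X Y + 2 * real n * \<epsilon>"
  define hX where "hX = (INF f\<in>(X \<rightarrow> Y). dis X f)"
  define hY where "hY = (INF g\<in>(Y \<rightarrow> X). dis Y g)"
  have hat: "dGH_hat X Y = (1/2) * max hX hY" unfolding dGH_hat_def hX_def hY_def by simp
  have XeN: "Xe \<noteq> {}" using assms(7) ne(1) unfolding eps_net_def by blast
  have YeN: "Ye \<noteq> {}" using assms(9) ne(2) unfolding eps_net_def by blast
  have n1: "n \<ge> 1" unfolding n_def using XeN YeN assms(6,8)
    by (simp add: Suc_leI card_gt_0_iff)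
  obtain x0 where x0: "x0 \<in> X" using ne by blast
  obtain y0 where y0: "y0 \<in> Y" using ne by blast
  have neXY: "X \<rightarrow> Y \<noteq> {}" using y0 by (metis PiE_empty_domain PiE_iff Pi_I empty_iff) 
  have neYX: "Y \<rightarrow> X \<noteq> {}" using x0 by (metis PiE_empty_domain PiE_iff Pi_I empty_iff) 
  have bbX: "bdd_below ((\<lambda>f. dis X f) ` (X \<rightarrow> Y))"
    by (rule bdd_belowI2[of _ 0]) (use dis_props(1)[OF bX bY _ ne(1)] in auto)
  have bbY: "bdd_below ((\<lambda>g. dis Y g) ` (Y \<rightarrow> X))"
    by (rule bdd_belowI2[of _ 0]) (use dis_props(1)[OF bY bX _ ne(2)] in auto)
  have key: "dGH X Y \<le> T + real n * \<delta>" if \<delta>: "\<delta> > 0" for \<delta>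
  proof -
    have "hX < hX + \<delta>" using \<delta> by simp
    then obtain f where f: "f \<in> X \<rightarrow> Y" "dis X f < hX + \<delta>"
      unfolding hX_def using cINF_less_iff[OF neXY bbX] by blast
    have "hY < hY + \<delta>" using \<delta> by simp
    then obtain g where g: "g \<in> Y \<rightarrow> X" "dis Y g < hY + \<delta>"
      unfolding hY_def using cINF_less_iff[OF neYX bbY] by blast
    define a where "a = 2 * dGH_hat X Y + \<delta>"
    have fa: "dis X f \<le> a" "dis Y g \<le> a" using f(2) g(2) unfolding a_def hat by auto
    have df: "\<forall>x\<in>X. \<forall>x'\<in>X. \<bar>dist x x' - dist (f x) (f x')\<bar> \<le> a"
      using dis_props(2)[OF bX bY f(1) ne(1)] fa by force
    have dg: "\<forall>y\<in>Y. \<forall>y'\<in>Y. \<bar>dist y y' - dist (g y) (g y')\<bar> \<le> a"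
      using dis_props(2)[OF bY bX g(1) ne(2)] fa by force
    have a0: "a \<ge> 0" using dis_props(1)[OF bX bY f(1) ne(1)] fa by linarith
    have df': "\<forall>x\<in>X. \<forall>x'\<in>X. dist (f x) (f x') \<ge> dist x x' - a" using df by (auto simp: abs_le_iff) (smt (verit))
    have dg': "\<forall>y\<in>Y. \<forall>y'\<in>Y. dist (g y) (g y') \<ge> dist y y' - a" using dg by (auto simp: abs_le_iff) (smt (verit))
    define R where "R = (real n - 1) * a + 2 * \<epsilon>"
    have D: "(\<forall>x\<in>X. \<exists>y\<in>Y. dist x (g y) \<le> R) \<or> (\<forall>y\<in>Y. \<exists>x\<in>X. dist y (f x) \<le> R)"
    proof (cases "card Xe \<le> card Ye")
      case True
      then have "n = card Xe" unfolding n_def by simp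
      then show ?thesis using core[OF f(1) g(1) df' dg' a0 ne assms(6,7)] unfolding R_def by simp
    next
      case False
      then have "n = card Ye" unfolding n_def by simp
      then show ?thesis using core[OF g(1) f(1) dg' df' a0 ne(2,1) assms(8,9)] unfolding R_def by blast
    qed
    have "dGH X Y \<le> (a + 2 * R) / 2"
      using D caseX[OF bX bY ne g(1) dg] caseY[OF bX bY ne f(1) df] by blast
    also have "(a + 2 * R) / 2 = (2 * real n - 1) * dGH_hat X Y + 2 * \<epsilon> + (2 * real n - 1) / 2 * \<delta>"
      unfolding R_def a_def by (simp add: field_simps)
    also have "\<dots> \<le> T + real n * \<delta>"
    proof -
      have "2 * \<epsilon> \<le> 2 * real n * \<epsilon>" using n1 assms(5)
        by (simp add: mult_right_mono)
      moreover have "(2 * real n - 1) / 2 * \<delta> \<le> real n * \<delta>" using \<delta> by (simp add: field_simps)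
      ultimately show ?thesis unfolding T_def by linarith
    qed
    finally show ?thesis .
  qed
  have "dGH X Y \<le> T"
  proof (rule ccontr)
    assume "\<not> dGH X Y \<le> T"
    then have pos: "dGH X Y - T > 0" by simp
    have np: "real n > 0" using n1 by simp
    define \<delta> where "\<delta> = (dGH X Y - T) / (2 * real n)"
    have "\<delta> > 0" unfolding \<delta>_def using pos np by simp
    then have "dGH X Y \<le> T + real n * \<delta>" by (rule key)
    moreover have "real n * \<delta> = (dGH X Y - T) / 2" unfolding \<delta>_def using np by (simp add: field_simps)
    ultimately show False using pos by (simp add: field_simps)
  qed
  then show ?thesis unfolding T_def n_def .
qed

end
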